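(* Let $(\rho,\sigma)\in\mathfrak V$ with $\sigma\le0$ and $\rho\mid l$, and let $\lambda\in K$. Let $\varphi$ be the automorphism of $W^{(l)}$ with $\varphi(X^{1/l})=X^{1/l}$ and $\varphi(Y)=Y+\lambda X^{\sigma/\rho}$, and let $\varphi_L$ be the automorphism of $L^{(l)}$ with $\varphi_L(x^{1/l})=x^{1/l}$, $\varphi_L(y)=y+\lambda x^{\sigma/\rho}$. Then for all $P\in W^{(l)}\setminus\{0\}$: $\ell_{\rho,\sigma}(\varphi(P))=\varphi_L(\ell_{\rho,\sigma}(P))$ and $v_{\rho,\sigma}(\varphi(P))=v_{\rho,\sigma}(P)$. Furthermore, $\ell_{\rho_1,\sigma_1}(\varphi(P))=\ell_{\rho_1,\sigma_1}(P)$ for all $(\rho_1,\sigma_1)\in\mathfrak V$ with $(\rho,\sigma)<(\rho_1,\sigma_1)<(-1,1)$.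
   Context: $K$ is a field of characteristic zero, $l\in\mathbb{N}$. $W^{(l)}$ is the associative $K$-algebra with $K$-basis $\{X^{i/l}Y^j:i\in\mathbb{Z},j\in\mathbb{N}_0\}$, powers of $X$ multiplying as Laurent monomials and $[Y,X^\alpha]=\alpha X^{\alpha-1}$ for $\alpha\in\frac1l\mathbb{Z}$. $L^{(l)}=K[x^{\pm1/l},y]$, $\Psi^{(l)}(X^{i/l}Y^j)=x^{i/l}y^j$ ($K$-linear); supports are sets of exponents with nonzero coefficient. $\mathfrak V=\{(\rho,\sigma)\in\mathbb{Z}^2:\gcd(\rho,\sigma)=1,\rho+\sigma>0\}$. For $P\ne0$, $v_{\rho,\sigma}(P)=\max\{\rho a+\sigma b:(a,b)\in\mathrm{Supp}(P)\}$, $\ell_{\rho,\sigma}(P)\in L^{(l)}$ = sum of terms of $\Psi^{(l)}(P)$ attaining it. Order: $(\rho,\sigma)<(-1,1)$ for all $(\rho,\sigma)\in\mathfrak V$, and on $\mathfrak V$, $(\rho_1,\sigma_1)\le(\rho,\sigma)$ iff $\rho_1\sigma-\sigma_1\rho\ge0$. *)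

theory Defs
  imports Complex_Main "HOL-Library.Poly_Mapping" "HOL-Library.Product_Plus"
begin

text \<open>Both W^(l) and L^(l) are represented on the same carrier: finitely supported
  coefficient maps (int x nat) =>0 a, where the key (i,j) stands for the basis element
  X^(i/l) Y^j of W^(l), resp. the monomial x^(i/l) y^j of L^(l).  Hence the map Psi^(l)
  is the identity on this carrier.  The commutative multiplication of L^(l) is the
  Poly_Mapping convolution product; the Weyl multiplication of W^(l) is wmult below.\<close>

type_synonym 'a wl = "(int \<times> nat) \<Rightarrow>\<^sub>0 'a"

text \<open>Product of basis elements: (X^(a/l) Y^j)(X^(b/l) Y^k)
  = sum over t \<le> j of binom(j,t) (b/l)(b/l-1)...(b/l-t+1) X^((a+b-t l)/l) Y^(j+k-t),
  which follows from [Y, X^alpha] = alpha X^(alpha-1).\<close>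
definition wmono :: "nat \<Rightarrow> int \<times> nat \<Rightarrow> int \<times> nat \<Rightarrow> 'a::field_char_0 wl" where
  "wmono l p q = (case p of (a, j) \<Rightarrow> case q of (b, k) \<Rightarrow>
     (\<Sum>t\<in>{0..j}. Poly_Mapping.single (a + b - int t * int l, j + k - t)
        (of_nat (j choose t) * (\<Prod>s<t. (of_int b / of_nat l - of_nat s)))))"

definition wscale :: "'a::field_char_0 \<Rightarrow> 'a wl \<Rightarrow> 'a wl" where
  "wscale c P = Poly_Mapping.map ((*) c) P"

definition wmult :: "nat \<Rightarrow> 'a::field_char_0 wl \<Rightarrow> 'a wl \<Rightarrow> 'a wl" where
  "wmult l P Q = (\<Sum>p\<in>Poly_Mapping.keys P. \<Sum>q\<in>Poly_Mapping.keys Q.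
      wscale (Poly_Mapping.lookup P p * Poly_Mapping.lookup Q q) (wmono l p q))"

definition wt :: "nat \<Rightarrow> int \<Rightarrow> int \<Rightarrow> int \<times> nat \<Rightarrow> rat" where
  "wt l \<rho> \<sigma> k = of_int \<rho> * of_int (fst k) / of_nat l + of_int \<sigma> * of_nat (snd k)"

definition vval :: "nat \<Rightarrow> int \<Rightarrow> int \<Rightarrow> 'a::zero wl \<Rightarrow> rat" where
  "vval l \<rho> \<sigma> P = Max (wt l \<rho> \<sigma> ` Poly_Mapping.keys P)"

definition ell :: "nat \<Rightarrow> int \<Rightarrow> int \<Rightarrow> 'a::comm_monoid_add wl \<Rightarrow> 'a wl" where
  "ell l \<rho> \<sigma> P = (\<Sum>k\<in>{k\<in>Poly_Mapping.keys P. wt l \<rho> \<sigma> k = vval l \<rho> \<sigma> P}.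
                      Poly_Mapping.single k (Poly_Mapping.lookup P k))"

definition VV :: "(int \<times> int) set" where
  "VV = {(\<rho>, \<sigma>). gcd \<rho> \<sigma> = 1 \<and> \<rho> + \<sigma> > 0}"

definition vle :: "int \<times> int \<Rightarrow> int \<times> int \<Rightarrow> bool" where
  "vle a b = (fst a * snd b - snd a * fst b \<ge> 0)"

text \<open>Strict order on VV extended by the convention that every element of VV is
  smaller than (-1,1).\<close>
definition vless :: "int \<times> int \<Rightarrow> int \<times> int \<Rightarrow> bool" where
  "vless a b = (a \<in> VV \<and> ((b = (-1, 1)) \<or> (b \<in> VV \<and> vle a b \<and> a \<noteq> b)))"

end

theory Submission
  imports Defs
begin


abbreviation mon :: "int \<times> nat \<Rightarrow> 'a::field_char_0 wl" where "mon k \<equiv> Poly_Mapping.single k 1"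

lemma zero_pair: "(0::int\<times>nat) = (0,0)" by (simp add: zero_prod_def)

lemma wscale_mult: "wscale c P = Poly_Mapping.single 0 c * P"
  by (simp add: wscale_def mult_map_scale_conv_mult)

lemma expand: "P = (\<Sum>k\<in>Poly_Mapping.keys P. Poly_Mapping.single k (Poly_Mapping.lookup P k))"
proof (rule poly_mapping_eqI)
  fix x
  show "Poly_Mapping.lookup P x = Poly_Mapping.lookup (\<Sum>k\<in>Poly_Mapping.keys P. Poly_Mapping.single k (Poly_Mapping.lookup P k)) x"
    by (auto simp: lookup_sum lookup_single when_def in_keys_iff)
qed

definition wrest :: "nat \<Rightarrow> int \<times> nat \<Rightarrow> int \<times> nat \<Rightarrow> 'a::field_char_0 wl" where
  "wrest l p q = (case p of (a, j) \<Rightarrow> case q of (b, k) \<Rightarrow>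
     (\<Sum>t\<in>{1..j}. Poly_Mapping.single (a + b - int t * int l, j + k - t)
        (of_nat (j choose t) * (\<Prod>s<t. (of_int b / of_nat l - of_nat s)))))"

lemma wmono_split: "wmono l p q = mon (p + q) + wrest l p q"
proof -
  obtain a j b k where p: "p = (a,j)" and q: "q = (b,k)" by (cases p, cases q) auto
  have "{0..j} = insert 0 {1..j}" by auto
  then show ?thesis unfolding p q wmono_def wrest_def
    by (simp add: sum.insert)
qed

lemma wrest_X: "wrest l (m, 0) q = 0"
  by (cases q) (simp add: wrest_def)

lemma wrest_Y: "wrest l p (0, k) = (0::'a::field_char_0 wl)"
proof -
  obtain a j where p: "p = (a,j)" by (cases p) auto
  have z: "(\<Prod>s<t. - of_nat s) = (0::'a)" if "Suc 0 \<le> t" for t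
    using that by (intro prod_zero) (auto intro!: bexI[of _ 0])
  then show ?thesis unfolding p wrest_def by (simp, intro sum.neutral) (auto simp: z)
qed

lemma wscale_single: "wscale c (mon k) = Poly_Mapping.single k c"
  by (simp add: wscale_mult mult_single)

lemma mult_expand: "P * Q = (\<Sum>p\<in>Poly_Mapping.keys P. \<Sum>q\<in>Poly_Mapping.keys Q.
      wscale (Poly_Mapping.lookup P p * Poly_Mapping.lookup Q q) (mon (p + q)))"
proof -
  have "P * Q = (\<Sum>p\<in>Poly_Mapping.keys P. Poly_Mapping.single p (Poly_Mapping.lookup P p)) *
     (\<Sum>q\<in>Poly_Mapping.keys Q. Poly_Mapping.single q (Poly_Mapping.lookup Q q))"
    using expand[of P] expand[of Q] by simp
  also have "\<dots> = (\<Sum>p\<in>Poly_Mapping.keys P. \<Sum>q\<in>Poly_Mapping.keys Q.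
      Poly_Mapping.single p (Poly_Mapping.lookup P p) * Poly_Mapping.single q (Poly_Mapping.lookup Q q))"
    by (simp add: sum_product)
  finally show ?thesis by (simp add: wscale_single mult_single)
qed

lemma wscale_add: "wscale c (A + B) = wscale c A + wscale c B"
  by (simp add: wscale_mult distrib_left)

lemma wscale_zero[simp]: "wscale c 0 = 0" by (simp add: wscale_mult)

lemma wmult_eq: "wmult l P Q = P * Q + (\<Sum>p\<in>Poly_Mapping.keys P. \<Sum>q\<in>Poly_Mapping.keys Q.
      wscale (Poly_Mapping.lookup P p * Poly_Mapping.lookup Q q) (wrest l p q))"
  unfolding wmult_def mult_expand wmono_split wscale_add by (simp add: sum.distrib)

lemma wmult_X: "wmult l (mon (m, 0)) Q = mon (m, 0) * Q"
  by (simp add: wmult_eq wrest_X)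

lemma wt_add: "wt l r s (p + q) = wt l r s p + wt l r s q"
  by (cases p, cases q) (simp add: wt_def algebra_simps add_divide_distrib)

lemma keys_wrest:
  assumes "k' \<in> Poly_Mapping.keys (wrest l p q :: 'a::field_char_0 wl)" and "l > 0" and "r + s > 0"
  shows "wt l r s k' < wt l r s p + wt l r s q"
proof -
  obtain a j b k where p: "p = (a,j)" and q: "q = (b,k)" by (cases p, cases q) auto
  have "k' \<in> (\<Union>t\<in>{1..j}. Poly_Mapping.keys (Poly_Mapping.single (a + b - int t * int l, j + k - t)
        (of_nat (j choose t) * (\<Prod>s<t. (of_int b / of_nat l - of_nat s))) :: 'a wl))"
    using assms(1) keys_sum unfolding p q wrest_def by fastforce
  then obtain t where t: "1 \<le> t" "t \<le> j" and k': "k' = (a + b - int t * int l, j + k - t)"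
    by (auto split: if_splits)
  have "wt l r s k' = wt l r s p + wt l r s q - of_nat t * of_int (r + s)"
    using t assms(2) unfolding k' p q wt_def
    by (simp add: of_nat_diff algebra_simps add_divide_distrib diff_divide_distrib)
  moreover have "of_nat t * of_int (r + s) > (0 :: rat)"
    using t assms(3) by simp
  ultimately show ?thesis by simp
qed

definition lowp :: "nat \<Rightarrow> int \<Rightarrow> int \<Rightarrow> rat \<Rightarrow> 'a::zero wl \<Rightarrow> bool" where
  "lowp l r s c P = (\<forall>k\<in>Poly_Mapping.keys P. wt l r s k < c)"
definition lep :: "nat \<Rightarrow> int \<Rightarrow> int \<Rightarrow> rat \<Rightarrow> 'a::zero wl \<Rightarrow> bool" where
  "lep l r s c P = (\<forall>k\<in>Poly_Mapping.keys P. wt l r s k \<le> c)"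
definition gep :: "nat \<Rightarrow> int \<Rightarrow> int \<Rightarrow> rat \<Rightarrow> 'a::zero wl \<Rightarrow> bool" where
  "gep l r s c P = (\<forall>k\<in>Poly_Mapping.keys P. wt l r s k \<ge> c)"

lemma keys_diff_sub: "Poly_Mapping.keys (P - Q) \<subseteq> Poly_Mapping.keys P \<union> Poly_Mapping.keys (Q :: 'a::ab_group_add wl)"
  by (auto simp: in_keys_iff lookup_minus)

lemma keys_wscale: "Poly_Mapping.keys (wscale c P) \<subseteq> Poly_Mapping.keys (P :: 'a::field_char_0 wl)"
proof -
  have "Poly_Mapping.keys (wscale c P) \<subseteq> {a + b |a b. a \<in> Poly_Mapping.keys (Poly_Mapping.single 0 c :: 'a wl) \<and> b \<in> Poly_Mapping.keys P}"
    unfolding wscale_mult by (rule keys_mult)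
  then show ?thesis by (auto split: if_splits simp: zero_pair)
qed

lemma keys_single_sub: "Poly_Mapping.keys (Poly_Mapping.single k c) \<subseteq> {k}" by simp

lemmas keysI = keys_add keys_diff_sub keys_wscale keys_single_sub

lemma lowp_add: "lowp l r s c P \<Longrightarrow> lowp l r s c Q \<Longrightarrow> lowp l r s c (P + Q)"
  using keys_add[of P Q] by (auto simp: lowp_def)
lemma lep_add: "lep l r s c P \<Longrightarrow> lep l r s c Q \<Longrightarrow> lep l r s c (P + Q)"
  using keys_add[of P Q] by (auto simp: lep_def)
lemma gep_add: "gep l r s c P \<Longrightarrow> gep l r s c Q \<Longrightarrow> gep l r s c (P + Q)"
  using keys_add[of P Q] by (auto simp: gep_def)
lemma lowp_diff: "lowp l r s c P \<Longrightarrow> lowp l r s c Q \<Longrightarrow> lowp l r s c (P - (Q::'a::field_char_0 wl))"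
  using keys_diff_sub[of P Q] by (auto simp: lowp_def)
lemma lep_diff: "lep l r s c P \<Longrightarrow> lep l r s c Q \<Longrightarrow> lep l r s c (P - (Q::'a::field_char_0 wl))"
  using keys_diff_sub[of P Q] by (auto simp: lep_def)
lemma lowp_wscale: "lowp l r s c P \<Longrightarrow> lowp l r s c (wscale a (P::'a::field_char_0 wl))"
  using keys_wscale[of a P] by (auto simp: lowp_def)
lemma lep_wscale: "lep l r s c P \<Longrightarrow> lep l r s c (wscale a (P::'a::field_char_0 wl))"
  using keys_wscale[of a P] by (auto simp: lep_def)
lemma gep_wscale: "gep l r s c P \<Longrightarrow> gep l r s c (wscale a (P::'a::field_char_0 wl))"
  using keys_wscale[of a P] by (auto simp: gep_def)
lemma lowp_sum: "(\<And>i. i \<in> I \<Longrightarrow> lowp l r s c (f i)) \<Longrightarrow> lowp l r s c (sum f I)"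
  using keys_sum[of f I] by (fastforce simp: lowp_def)
lemma lep_sum: "(\<And>i. i \<in> I \<Longrightarrow> lep l r s c (f i)) \<Longrightarrow> lep l r s c (sum f I)"
  using keys_sum[of f I] by (fastforce simp: lep_def)
lemma gep_sum: "(\<And>i. i \<in> I \<Longrightarrow> gep l r s c (f i)) \<Longrightarrow> gep l r s c (sum f I)"
  using keys_sum[of f I] by (fastforce simp: gep_def)
lemma lowp_lep: "lowp l r s c P \<Longrightarrow> lep l r s c P"
  by (auto simp: lowp_def lep_def less_imp_le)
lemma lep_lowp: "lep l r s c P \<Longrightarrow> c < c' \<Longrightarrow> lowp l r s c' P"
  by (auto simp: lowp_def lep_def)
lemma lowp_zero[simp]: "lowp l r s c 0" by (simp add: lowp_def)
lemma lep_single: "wt l r s k \<le> c \<Longrightarrow> lep l r s c (Poly_Mapping.single k a)"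
  by (simp add: lep_def)
lemma gep_single: "wt l r s k \<ge> c \<Longrightarrow> gep l r s c (Poly_Mapping.single k a)"
  by (simp add: gep_def)

lemma keys_multE: assumes "k \<in> Poly_Mapping.keys (P * (Q::'a::field_char_0 wl))"
  obtains a b where "a \<in> Poly_Mapping.keys P" "b \<in> Poly_Mapping.keys Q" "k = a + b"
  using keys_mult[of P Q] assms by blast

lemma lep_mult: "lep l r s c1 P \<Longrightarrow> lep l r s c2 Q \<Longrightarrow> lep l r s (c1 + c2) (P * (Q::'a::field_char_0 wl))"
  unfolding lep_def by (metis keys_multE wt_add add_mono)
lemma gep_mult: "gep l r s c1 P \<Longrightarrow> gep l r s c2 Q \<Longrightarrow> gep l r s (c1 + c2) (P * (Q::'a::field_char_0 wl))"
  unfolding gep_def by (metis keys_multE wt_add add_mono)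
lemma lowp_mult1: "lowp l r s c1 P \<Longrightarrow> lep l r s c2 Q \<Longrightarrow> lowp l r s (c1 + c2) (P * (Q::'a::field_char_0 wl))"
  unfolding lowp_def lep_def by (metis keys_multE wt_add add_less_le_mono)
lemma lowp_mult2: "lep l r s c1 P \<Longrightarrow> lowp l r s c2 Q \<Longrightarrow> lowp l r s (c1 + c2) (P * (Q::'a::field_char_0 wl))"
  unfolding lowp_def lep_def by (metis keys_multE wt_add add_le_less_mono)

lemma lowp_wmult:
  assumes "lep l r s c1 P" "lep l r s c2 Q" "l > 0" "r + s > 0"
  shows "lowp l r s (c1 + c2) (wmult l P Q - P * (Q::'a::field_char_0 wl))"
proof -
  have "wmult l P Q - P * Q = (\<Sum>p\<in>Poly_Mapping.keys P. \<Sum>q\<in>Poly_Mapping.keys Q.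
      wscale (Poly_Mapping.lookup P p * Poly_Mapping.lookup Q q) (wrest l p q))"
    by (simp add: wmult_eq)
  also have "lowp l r s (c1 + c2) \<dots>"
  proof (intro lowp_sum lowp_wscale)
    fix p q assume pq: "p \<in> Poly_Mapping.keys P" "q \<in> Poly_Mapping.keys Q"
    show "lowp l r s (c1 + c2) (wrest l p q :: 'a wl)"
      unfolding lowp_def
    proof
      fix k assume "k \<in> Poly_Mapping.keys (wrest l p q :: 'a wl)"
      from keys_wrest[OF this assms(3,4)] have "wt l r s k < wt l r s p + wt l r s q" .
      also have "\<dots> \<le> c1 + c2" using pq assms(1,2) by (auto simp: lep_def intro: add_mono)
      finally show "wt l r s k < c1 + c2" .
    qed
  qed
  finally show ?thesis .
qed


lemma wt_0j: "wt l r s (0, j) = of_int s * of_nat j" by (simp add: wt_def)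
lemma wt_Suc: "wt l r s (0, Suc j) = of_int s + wt l r s (0, j)" by (simp add: wt_def algebra_simps)
lemma mon_Suc: "(mon (0, Suc j) :: 'a::field_char_0 wl) = mon (0,1) * mon (0,j)"
  by (simp add: mult_single)
lemma one_mon: "(1 :: 'a::field_char_0 wl) = mon (0,0)"
  by (simp add: zero_pair[symmetric])

lemma wmult_Y: "wmult l P (mon (0, k)) = P * (mon (0, k) :: 'a::field_char_0 wl)"
  by (simp add: wmult_eq wrest_Y)

lemma Ypow:
  fixes A B :: "nat \<Rightarrow> 'a::field_char_0 wl"
  assumes l: "l > 0" and rs: "r + s > 0" and e: "wt l r s (e, 0) \<le> of_int s"
    and Z: "Z = mon (0,1) + Poly_Mapping.single (e, 0) lam"
    and A0: "A 0 = 1" and B0: "B 0 = 1"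
    and AS: "\<And>j. A (Suc j) = wmult l Z (A j)" and BS: "\<And>j. B (Suc j) = Z * B j"
  shows "lep l r s (wt l r s (0,j)) (B j) \<and> lowp l r s (wt l r s (0,j)) (A j - B j)"
proof (induction j)
  case 0
  then show ?case by (simp add: A0 B0 lep_def zero_pair wt_def)
next
  case (Suc j)
  have Zl: "lep l r s (of_int s) Z" unfolding Z
    by (intro lep_add lep_single) (use e in \<open>auto simp: wt_def\<close>)
  have Al: "lep l r s (wt l r s (0,j)) (A j)"
    using Suc lep_add[OF _ lowp_lep, of l r s _ "B j" "A j - B j"] by simp
  have eq: "A (Suc j) - B (Suc j) = (wmult l Z (A j) - Z * A j) + Z * (A j - B j)"
    by (simp add: AS BS algebra_simps)
  have 1: "lep l r s (of_int s + wt l r s (0,j)) (B (Suc j))"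
    unfolding BS using lep_mult[OF Zl, of "wt l r s (0,j)" "B j"] Suc by blast
  have 2: "lowp l r s (of_int s + wt l r s (0,j)) (A (Suc j) - B (Suc j))"
    unfolding eq using lowp_wmult[OF Zl Al l rs] lowp_mult2[OF Zl, of "wt l r s (0,j)" "A j - B j"] Suc
    by (blast intro: lowp_add)
  show ?case unfolding wt_Suc using 1 2 by blast
qed

lemma Ypow_ge:
  fixes B :: "nat \<Rightarrow> 'a::field_char_0 wl"
  assumes e: "wt l r s (e, 0) \<ge> of_int s"
    and Z: "Z = mon (0,1) + Poly_Mapping.single (e, 0) lam"
    and B0: "B 0 = 1" and BS: "\<And>j. B (Suc j) = Z * B j"
  shows "gep l r s (wt l r s (0,j)) (B j)"
proof (induction j)
  case 0
  then show ?case by (simp add: B0 gep_def zero_pair wt_def)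
next
  case (Suc j)
  have Zl: "gep l r s (of_int s) Z" unfolding Z
    by (intro gep_add gep_single) (use e in \<open>auto simp: wt_def\<close>)
  show ?case unfolding wt_Suc BS using gep_mult[OF Zl Suc] .
qed

lemma Ypow_lt:
  fixes B :: "nat \<Rightarrow> 'a::field_char_0 wl"
  assumes e: "wt l r s (e, 0) < of_int s"
    and Z: "Z = mon (0,1) + Poly_Mapping.single (e, 0) lam"
    and B0: "B 0 = 1" and BS: "\<And>j. B (Suc j) = Z * B j"
  shows "lep l r s (wt l r s (0,j)) (B j) \<and> lowp l r s (wt l r s (0,j)) (B j - mon (0,j))"
proof (induction j)
  case 0
  then show ?case by (simp add: B0 lep_def zero_pair wt_def one_mon[symmetric])
next
  case (Suc j)
  have Zl: "lep l r s (of_int s) Z" unfolding Z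
    by (intro lep_add lep_single) (use e in \<open>auto simp: wt_def\<close>)
  have Zl2: "lowp l r s (of_int s) (Poly_Mapping.single (e, 0) lam :: 'a wl)"
    using e by (simp add: lowp_def)
  have Yl: "lep l r s (of_int s) (mon (0,1) :: 'a wl)"
    by (simp add: lep_def wt_def)
  have eq: "B (Suc j) - mon (0, Suc j) = Poly_Mapping.single (e, 0) lam * B j + mon (0,1) * (B j - mon (0,j))"
    unfolding BS Z mon_Suc[of j] by (simp add: algebra_simps)
  have 1: "lep l r s (of_int s + wt l r s (0,j)) (B (Suc j))"
    unfolding BS using lep_mult[OF Zl, of "wt l r s (0,j)" "B j"] Suc by blast
  have 2: "lowp l r s (of_int s + wt l r s (0,j)) (B (Suc j) - mon (0, Suc j))"
    unfolding eq using lowp_mult1[OF Zl2, of "wt l r s (0,j)" "B j"] lowp_mult2[OF Yl, of "wt l r s (0,j)"] Suc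
    by (blast intro: lowp_add)
  show ?case unfolding wt_Suc using 1 2 by blast
qed

lemma hom_X:
  fixes M :: "'a::field_char_0 wl \<Rightarrow> 'a wl \<Rightarrow> 'a wl" and f :: "'a wl \<Rightarrow> 'a wl"
  assumes M: "\<And>m Q. M (mon (m,0)) Q = mon (m,0) * Q"
    and fmult: "\<And>P Q. f (M P Q) = M (f P) (f Q)" and f1: "f 1 = 1" and fX: "f (mon (1,0)) = mon (1,0)"
  shows "f (mon (i,0)) = mon (i,0)"
proof -
  have pos: "f (mon (int n,0)) = mon (int n,0)" for n
  proof (induction n)
    case 0
    then show ?case using f1 by (simp add: one_mon)
  next
    case (Suc n)
    have "(mon (int (Suc n), 0) :: 'a wl) = M (mon (1,0)) (mon (int n,0))"
      by (simp add: M mult_single)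
    then show ?case using Suc by (simp add: fmult fX)
  qed
  show ?thesis
  proof (cases "i \<ge> 0")
    case True
    then show ?thesis using pos[of "nat i"] by simp
  next
    case False
    define n where "n = nat (- i)"
    have i: "i = - int n" using False n_def by simp
    have "M (mon (int n,0)) (mon (- int n,0)) = (1 :: 'a wl)"
      by (simp add: M mult_single one_mon)
    then have "M (mon (int n,0)) (f (mon (- int n,0))) = 1"
      using fmult[of "mon (int n,0)" "mon (- int n,0)"] pos[of n] f1 by simp
    then have h: "mon (int n,0) * f (mon (- int n,0)) = 1" by (simp add: M)
    have "f (mon (- int n,0)) = (mon (- int n,0) * mon (int n,0)) * f (mon (- int n,0))"
      by (simp add: mult_single one_mon[symmetric])
    also have "\<dots> = mon (- int n,0)" by (simp add: mult.assoc h)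
    finally show ?thesis by (simp add: i)
  qed
qed



lemma recog:
  fixes H D :: "'a::field_char_0 wl"
  assumes H0: "H \<noteq> 0" and Hl: "lep l r s c H" and Hg: "gep l r s c H" and Dl: "lowp l r s c D"
  shows "vval l r s (H + D) = c \<and> ell l r s (H + D) = H"
proof -
  have Hw: "k \<in> Poly_Mapping.keys H \<Longrightarrow> wt l r s k = c" for k
    using Hl Hg by (force simp: lep_def gep_def)
  have Dz: "k \<in> Poly_Mapping.keys H \<Longrightarrow> Poly_Mapping.lookup D k = 0" for k
    using Hw[of k] Dl by (force simp: lowp_def in_keys_iff)
  have sub: "Poly_Mapping.keys H \<subseteq> Poly_Mapping.keys (H + D)"
    using Dz by (auto simp: in_keys_iff lookup_add)
  have le: "wt l r s k \<le> c" if "k \<in> Poly_Mapping.keys (H + D)" for k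
  proof -
    have "k \<in> Poly_Mapping.keys H \<or> k \<in> Poly_Mapping.keys D" using keys_add[of H D] that by blast
    then show ?thesis
    proof
      assume "k \<in> Poly_Mapping.keys H" then show ?thesis using Hw by simp
    next
      assume "k \<in> Poly_Mapping.keys D" then show ?thesis using Dl unfolding lowp_def by (simp add: less_imp_le)
    qed
  qed
  have S: "{k \<in> Poly_Mapping.keys (H + D). wt l r s k = c} = Poly_Mapping.keys H"
    using keys_add[of H D] Hw Dl sub by (force simp: lowp_def)
  have "Poly_Mapping.keys H \<noteq> {}"
  proof
    assume "Poly_Mapping.keys H = {}"
    then have "H = 0" by (intro poly_mapping_eqI) (simp add: in_keys_iff[symmetric])
    then show False using H0 by simp
  qed
  then obtain k0 where k0: "k0 \<in> Poly_Mapping.keys H" by blast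
  have v: "vval l r s (H + D) = c"
    unfolding vval_def
  proof (rule antisym)
    show "Max (wt l r s ` Poly_Mapping.keys (H + D)) \<le> c"
      using le k0 sub by (subst Max_le_iff) auto
    show "c \<le> Max (wt l r s ` Poly_Mapping.keys (H + D))"
      using k0 sub Hw[OF k0] by (intro Max_ge) force+
  qed
  have "ell l r s (H + D) = (\<Sum>k\<in>Poly_Mapping.keys H. Poly_Mapping.single k (Poly_Mapping.lookup (H + D) k))"
    unfolding ell_def v S ..
  also have "\<dots> = (\<Sum>k\<in>Poly_Mapping.keys H. Poly_Mapping.single k (Poly_Mapping.lookup H k))"
    by (intro sum.cong) (auto simp: lookup_add Dz)
  also have "\<dots> = H" using expand[of H] by simp
  finally show ?thesis using v by simp
qed

lemma f_zero: fixes f :: "'a::field_char_0 wl \<Rightarrow> 'a wl" assumes add: "\<And>P Q. f (P + Q) = f P + f Q" shows "f 0 = (0 :: 'a::field_char_0 wl)"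
proof -
  have "f 0 = f 0 + f 0" using add[of 0 0] by (simp only: add_0)
  then show ?thesis by (metis add_cancel_right_right)
qed

lemma f_sum:
  fixes f :: "'a::field_char_0 wl \<Rightarrow> 'a wl"
  assumes add: "\<And>P Q. f (P + Q) = f P + f Q"
  shows "f (sum g S) = (\<Sum>k\<in>S. f (g k))"
proof (induction S rule: infinite_finite_induct)
  case (infinite A) then show ?case using f_zero[OF add] by simp
next
  case empty then show ?case using f_zero[OF add] by simp
next
  case (insert x F) then show ?case by (simp add: add)
qed

lemma wscale_diff: "wscale c (A - B) = wscale c A - wscale c (B::'a::field_char_0 wl)"
  by (simp add: wscale_mult right_diff_distrib)


lemma main_gen:
  fixes f g :: "'a::field_char_0 wl \<Rightarrow> 'a wl" and P :: "'a wl"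
  assumes fadd: "\<And>P Q. f (P + Q) = f P + f Q" and fsc: "\<And>c P. f (wscale c P) = wscale c (f P)"
    and gadd: "\<And>P Q. g (P + Q) = g P + g Q" and gsc: "\<And>c P. g (wscale c P) = wscale c (g P)"
    and ginj: "inj g"
    and dl: "\<And>k. lowp l r s (wt l r s k) (f (mon k) - g (mon k))"
    and gl: "\<And>k. lep l r s (wt l r s k) (g (mon k))"
    and gg: "\<And>k. gep l r s (wt l r s k) (g (mon k))"
    and P0: "P \<noteq> 0"
  shows "ell l r s (f P) = g (ell l r s P) \<and> vval l r s (f P) = vval l r s P"
proof -
  define v where "v = vval l r s P"
  define c where "c = Poly_Mapping.lookup P"
  define S1 where "S1 = {k \<in> Poly_Mapping.keys P. wt l r s k = v}"
  define S2 where "S2 = {k \<in> Poly_Mapping.keys P. wt l r s k \<noteq> v}"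
  have fin: "finite (Poly_Mapping.keys P)" by simp
  have ne: "Poly_Mapping.keys P \<noteq> {}" using P0 by simp
  have lev: "k \<in> Poly_Mapping.keys P \<Longrightarrow> wt l r s k \<le> v" for k
    unfolding v_def vval_def by (intro Max_ge) auto
  have S2lt: "k \<in> S2 \<Longrightarrow> wt l r s k < v" for k
    using lev[of k] unfolding S2_def by (auto simp: order_less_le)
  have un: "Poly_Mapping.keys P = S1 \<union> S2" and dj: "S1 \<inter> S2 = {}" and f1: "finite S1" and f2: "finite S2"
    unfolding S1_def S2_def by auto
  obtain k0 where k0: "k0 \<in> Poly_Mapping.keys P" "wt l r s k0 = v"
  proof -
    have "v \<in> wt l r s ` Poly_Mapping.keys P" unfolding v_def vval_def using fin ne by (intro Max_in) auto
    then show ?thesis using that by auto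
  qed
  have E: "ell l r s P = (\<Sum>k\<in>S1. wscale (c k) (mon k))"
    unfolding ell_def S1_def v_def c_def by (simp add: wscale_single)
  have E0: "ell l r s P \<noteq> 0"
  proof
    assume "ell l r s P = 0"
    then have "Poly_Mapping.lookup (ell l r s P) k0 = 0" by simp
    moreover have "Poly_Mapping.lookup (ell l r s P) k0 = c k0"
      unfolding ell_def using k0 unfolding v_def c_def
      by (simp add: lookup_sum lookup_single when_def sum.delta)
    ultimately show False using k0 unfolding c_def by (simp add: in_keys_iff)
  qed
  have gE0: "g (ell l r s P) \<noteq> 0"
    using E0 ginj f_zero[OF gadd] by (metis injD)
  have gE: "g (ell l r s P) = (\<Sum>k\<in>S1. wscale (c k) (g (mon k)))"
    unfolding E f_sum[OF gadd] gsc ..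
  have fP: "f P = (\<Sum>k\<in>S1. wscale (c k) (f (mon k))) + (\<Sum>k\<in>S2. wscale (c k) (f (mon k)))"
  proof -
    have "P = (\<Sum>k\<in>Poly_Mapping.keys P. wscale (c k) (mon k))"
      using expand[of P] unfolding c_def by (simp add: wscale_single)
    then have "f P = (\<Sum>k\<in>Poly_Mapping.keys P. wscale (c k) (f (mon k)))"
      by (metis (no_types, lifting) f_sum[OF fadd] fsc sum.cong)
    then show ?thesis unfolding un using sum.union_disjoint[OF f1 f2 dj] by simp
  qed
  define D where "D = (\<Sum>k\<in>S1. wscale (c k) (f (mon k) - g (mon k))) + (\<Sum>k\<in>S2. wscale (c k) (f (mon k)))"
  have fPD: "f P = g (ell l r s P) + D"
    unfolding fP gE D_def wscale_diff by (simp add: sum_subtractf)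
  have Dl: "lowp l r s v D"
    unfolding D_def
  proof (intro lowp_add lowp_sum lowp_wscale)
    fix k assume "k \<in> S1"
    then show "lowp l r s v (f (mon k) - g (mon k))" using dl[of k] by (simp add: S1_def)
  next
    fix k assume k: "k \<in> S2"
    have "f (mon k) = g (mon k) + (f (mon k) - g (mon k))" by simp
    then have "lep l r s (wt l r s k) (f (mon k))"
      using lep_add[OF gl lowp_lep[OF dl]] by metis
    then show "lowp l r s v (f (mon k))" using lep_lowp S2lt[OF k] by blast
  qed
  have Hl: "lep l r s v (g (ell l r s P))"
    unfolding gE by (intro lep_sum lep_wscale) (use gl in \<open>auto simp: S1_def\<close>)
  have Hg: "gep l r s v (g (ell l r s P))"
    unfolding gE by (intro gep_sum gep_wscale) (use gg in \<open>auto simp: S1_def\<close>)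
  show ?thesis using recog[OF gE0 Hl Hg Dl] unfolding fPD v_def by simp
qed



lemma strict_lemma:
  assumes V: "(\<rho>, \<sigma>) \<in> VV" and V1: "(\<rho>1, \<sigma>1) \<in> VV" and rpos: "\<rho> > 0"
    and ge: "\<rho> * \<sigma>1 - \<sigma> * \<rho>1 \<ge> 0" and ne: "(\<rho>, \<sigma>) \<noteq> (\<rho>1, \<sigma>1)"
  shows "\<rho> * \<sigma>1 - \<sigma> * \<rho>1 > 0"
proof (rule ccontr)
  assume "\<not> ?thesis"
  then have eq: "\<rho> * \<sigma>1 = \<sigma> * \<rho>1" using ge by simp
  have cop: "coprime \<rho> \<sigma>" using V by (simp add: VV_def coprime_iff_gcd_eq_1)
  have "\<rho> dvd \<sigma> * \<rho>1" unfolding eq[symmetric] by simp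
  then have "\<rho> dvd \<rho>1" using cop by (simp add: coprime_dvd_mult_right_iff)
  then obtain k where k: "\<rho>1 = \<rho> * k" by blast
  have s1: "\<sigma>1 = \<sigma> * k" using eq k rpos by (simp add: algebra_simps)
  have "gcd \<rho>1 \<sigma>1 = \<bar>gcd \<rho> \<sigma> * k\<bar>" unfolding k s1
    using gcd_mult_right[of \<rho> k \<sigma>] by (simp add: gcd.commute)
  then have "\<bar>k\<bar> = 1" using V V1 by (simp add: VV_def)
  moreover have "k * (\<rho> + \<sigma>) > 0" using V1 k s1 by (simp add: VV_def algebra_simps)
  then have "k > 0" using V by (simp add: VV_def zero_less_mult_iff)
  ultimately have "k = 1" by simp
  then show False using ne k s1 by simp
qed



theorem proposition4p2:
  fixes l :: nat and \<rho> \<sigma> :: int and lam :: "'a::field_char_0"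
    and \<phi> :: "'a wl \<Rightarrow> 'a wl" and \<phi>L :: "'a wl \<Rightarrow> 'a wl"
  assumes l: "l > 0"
    and V: "(\<rho>, \<sigma>) \<in> VV" and sig: "\<sigma> \<le> 0" and rdvd: "\<rho> dvd int l"
    and phi_add: "\<And>P Q. \<phi> (P + Q) = \<phi> P + \<phi> Q"
    and phi_scale: "\<And>c P. \<phi> (wscale c P) = wscale c (\<phi> P)"
    and phi_mult: "\<And>P Q. \<phi> (wmult l P Q) = wmult l (\<phi> P) (\<phi> Q)"
    and phi_one: "\<phi> 1 = 1"
    and phi_bij: "bij \<phi>"
    and phi_X: "\<phi> (Poly_Mapping.single (1, 0) 1) = Poly_Mapping.single (1, 0) 1"
    and phi_Y: "\<phi> (Poly_Mapping.single (0, 1) 1) =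
                 Poly_Mapping.single (0, 1) 1 + Poly_Mapping.single (\<sigma> * (int l div \<rho>), 0) lam"
    and phiL_add: "\<And>P Q. \<phi>L (P + Q) = \<phi>L P + \<phi>L Q"
    and phiL_scale: "\<And>c P. \<phi>L (wscale c P) = wscale c (\<phi>L P)"
    and phiL_mult: "\<And>P Q. \<phi>L (P * Q) = \<phi>L P * \<phi>L Q"
    and phiL_one: "\<phi>L 1 = 1"
    and phiL_bij: "bij \<phi>L"
    and phiL_X: "\<phi>L (Poly_Mapping.single (1, 0) 1) = Poly_Mapping.single (1, 0) 1"
    and phiL_Y: "\<phi>L (Poly_Mapping.single (0, 1) 1) =
                 Poly_Mapping.single (0, 1) 1 + Poly_Mapping.single (\<sigma> * (int l div \<rho>), 0) lam"
  shows "\<forall>P. P \<noteq> 0 \<longrightarrow>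
           ell l \<rho> \<sigma> (\<phi> P) = \<phi>L (ell l \<rho> \<sigma> P)
         \<and> vval l \<rho> \<sigma> (\<phi> P) = vval l \<rho> \<sigma> P
         \<and> (\<forall>\<rho>1 \<sigma>1. (\<rho>1, \<sigma>1) \<in> VV \<and> vless (\<rho>, \<sigma>) (\<rho>1, \<sigma>1) \<and> vless (\<rho>1, \<sigma>1) (-1, 1)
               \<longrightarrow> ell l \<rho>1 \<sigma>1 (\<phi> P) = ell l \<rho>1 \<sigma>1 P)"
proof -
  have rpos: "\<rho> > 0" using V sig by (simp add: VV_def)
  have rs: "\<rho> + \<sigma> > 0" using V by (simp add: VV_def)
  define d where "d = int l div \<rho>"
  have ld: "\<rho> * d = int l" using rdvd by (simp add: d_def)
  have dpos: "d > 0" proof -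
    have "0 < \<rho> * d" using ld l by simp
    then show ?thesis using rpos by (simp add: zero_less_mult_iff)
  qed
  define e where "e = \<sigma> * d"
  define Z :: "'a wl" where "Z = mon (0,1) + Poly_Mapping.single (e,0) lam"
  have phiY: "\<phi> (mon (0,1)) = Z" using phi_Y by (simp add: Z_def e_def d_def)
  have phiLY: "\<phi>L (mon (0,1)) = Z" using phiL_Y by (simp add: Z_def e_def d_def)
  have phiX: "\<phi> (mon (i,0)) = mon (i,0)" for i
    by (rule hom_X[where M = "wmult l"]) (simp_all add: wmult_X phi_mult phi_one phi_X)
  have phiLX: "\<phi>L (mon (i,0)) = mon (i,0)" for i
    by (rule hom_X[where M = "(*)"]) (simp_all add: phiL_mult phiL_one phiL_X)
  define A where "A j = \<phi> (mon (0,j))" for j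
  define B where "B j = \<phi>L (mon (0,j))" for j
  have A0: "A 0 = 1" unfolding A_def using phi_one by (simp add: one_mon)
  have B0: "B 0 = 1" unfolding B_def using phiL_one by (simp add: one_mon)
  have AS: "A (Suc j) = wmult l Z (A j)" for j
  proof -
    have "(mon (0, Suc j) :: 'a wl) = wmult l (mon (0,1)) (mon (0,j))"
      by (simp only: wmult_Y mon_Suc[of j])
    then show ?thesis unfolding A_def by (simp only: phi_mult phiY)
  qed
  have BS: "B (Suc j) = Z * B j" for j
    unfolding B_def mon_Suc[of j] phiL_mult phiLY ..
  have mon_split: "(mon (i,j) :: 'a wl) = mon (i,0) * mon (0,j)" for i j
    by (simp add: mult_single)
  have phimon: "\<phi> (mon (i,j)) = mon (i,0) * A j" for i j
  proof -
    have "(mon (i,j) :: 'a wl) = wmult l (mon (i,0)) (mon (0,j))"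
      by (simp add: wmult_X mult_single)
    then have "\<phi> (mon (i,j)) = wmult l (\<phi> (mon (i,0))) (\<phi> (mon (0,j)))" by (simp only: phi_mult)
    then show ?thesis unfolding A_def phiX wmult_X .
  qed
  have phiLmon: "\<phi>L (mon (i,j)) = mon (i,0) * B j" for i j
    unfolding B_def mon_split[of i j] phiL_mult phiLX ..
  have wt_split: "wt l r s (i,j) = wt l r s (i,0) + wt l r s (0,j)" for r s i j
    using wt_add[of l r s "(i,0)" "(0,j)"] by simp
  have G: "lowp l r s (wt l r s k) (\<phi> (mon k) - \<phi>L (mon k)) \<and> lep l r s (wt l r s k) (\<phi>L (mon k))"
    if rs': "r + s > 0" and e': "wt l r s (e, 0) \<le> of_int s" for r s k
  proof -
    obtain i j where k: "k = (i,j)" by (cases k)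
    have Y: "lep l r s (wt l r s (0,j)) (B j) \<and> lowp l r s (wt l r s (0,j)) (A j - B j)"
      by (rule Ypow[OF l rs' e' Z_def A0 B0 AS BS])
    have X: "lep l r s (wt l r s (i,0)) (mon (i,0) :: 'a wl)" by (rule lep_single) simp
    have "\<phi> (mon k) - \<phi>L (mon k) = mon (i,0) * (A j - B j)"
      unfolding k phimon phiLmon by (simp add: right_diff_distrib)
    then show ?thesis unfolding k phiLmon wt_split[of r s i j]
      using lowp_mult2[OF X] lep_mult[OF X] Y by simp
  qed
  have wte: "wt l \<rho> \<sigma> (e, 0) = of_int \<sigma>"
  proof -
    have "(of_int \<rho> * of_int e :: rat) = of_int \<sigma> * of_nat l"
      unfolding e_def using ld by (metis mult.left_commute of_int_mult of_int_of_nat_eq)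
    then show ?thesis using l by (simp add: wt_def)
  qed
  have part1: "ell l \<rho> \<sigma> (\<phi> P) = \<phi>L (ell l \<rho> \<sigma> P) \<and> vval l \<rho> \<sigma> (\<phi> P) = vval l \<rho> \<sigma> P"
    if P0: "P \<noteq> 0" for P
  proof (rule main_gen[OF phi_add phi_scale phiL_add phiL_scale bij_is_inj[OF phiL_bij] _ _ _ P0])
    fix k
    show "lowp l \<rho> \<sigma> (wt l \<rho> \<sigma> k) (\<phi> (mon k) - \<phi>L (mon k))" using G[OF rs] wte by simp
    show "lep l \<rho> \<sigma> (wt l \<rho> \<sigma> k) (\<phi>L (mon k))" using G[OF rs] wte by simp
    obtain i j where k: "k = (i,j)" by (cases k)
    have Y: "gep l \<rho> \<sigma> (wt l \<rho> \<sigma> (0,j)) (B j)"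
      by (rule Ypow_ge[OF _ Z_def B0 BS]) (simp add: wte)
    have X: "gep l \<rho> \<sigma> (wt l \<rho> \<sigma> (i,0)) (mon (i,0) :: 'a wl)" by (rule gep_single) simp
    show "gep l \<rho> \<sigma> (wt l \<rho> \<sigma> k) (\<phi>L (mon k))"
      unfolding k phiLmon wt_split[of \<rho> \<sigma> i j] using gep_mult[OF X Y] .
  qed
  have part2: "ell l \<rho>1 \<sigma>1 (\<phi> P) = ell l \<rho>1 \<sigma>1 P"
    if P0: "P \<noteq> 0" and V1: "(\<rho>1, \<sigma>1) \<in> VV" and vl: "vless (\<rho>, \<sigma>) (\<rho>1, \<sigma>1)" for P \<rho>1 \<sigma>1
  proof -
    have "(\<rho>1, \<sigma>1) \<noteq> (-1, 1)" using V1 by (auto simp: VV_def)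
    then have "vle (\<rho>, \<sigma>) (\<rho>1, \<sigma>1) \<and> (\<rho>, \<sigma>) \<noteq> (\<rho>1, \<sigma>1)" using vl unfolding vless_def by blast
    then have pos: "\<rho> * \<sigma>1 - \<sigma> * \<rho>1 > 0"
      by (intro strict_lemma[OF V V1 rpos]) (auto simp: vle_def)
    have rs1: "\<rho>1 + \<sigma>1 > 0" using V1 by (simp add: VV_def)
    have i: "\<rho>1 * (\<sigma> * d) < \<sigma>1 * (\<rho> * d)"
      using pos dpos by (simp add: algebra_simps mult_strict_right_mono)
    have wte1: "wt l \<rho>1 \<sigma>1 (e, 0) < of_int \<sigma>1"
    proof -
      have "(of_int (\<rho>1 * e) :: rat) < of_int (\<sigma>1 * int l)"
        using i ld unfolding e_def of_int_less_iff by simp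
      then have "(of_int \<rho>1 * of_int e :: rat) < of_int \<sigma>1 * of_nat l" by simp
      then show ?thesis using l by (simp add: wt_def pos_divide_less_eq)
    qed
    have ll: "lowp l \<rho>1 \<sigma>1 (wt l \<rho>1 \<sigma>1 k) (\<phi> (mon k) - mon k)" for k
    proof -
      obtain i j where k: "k = (i,j)" by (cases k)
      have Y: "lep l \<rho>1 \<sigma>1 (wt l \<rho>1 \<sigma>1 (0,j)) (B j) \<and> lowp l \<rho>1 \<sigma>1 (wt l \<rho>1 \<sigma>1 (0,j)) (B j - mon (0,j))"
        by (rule Ypow_lt[OF wte1 Z_def B0 BS])
      have X: "lep l \<rho>1 \<sigma>1 (wt l \<rho>1 \<sigma>1 (i,0)) (mon (i,0) :: 'a wl)" by (rule lep_single) simp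
      have eq: "\<phi> (mon k) - mon k = (\<phi> (mon k) - \<phi>L (mon k)) + mon (i,0) * (B j - mon (0,j))"
      proof -
        have a: "\<phi>L (mon k) = mon (i,0) * B j" unfolding k by (rule phiLmon)
        have b: "(mon k :: 'a wl) = mon (i,0) * mon (0,j)" unfolding k by (rule mon_split)
        have c: "mon (i,0) * (B j - mon (0,j)) = \<phi>L (mon k) - mon k" unfolding a by (simp only: right_diff_distrib b)
        show ?thesis unfolding c by simp
      qed
      have 1: "lowp l \<rho>1 \<sigma>1 (wt l \<rho>1 \<sigma>1 k) (\<phi> (mon k) - \<phi>L (mon k))"
        using G[OF rs1 less_imp_le[OF wte1]] by blast
      have 2: "lowp l \<rho>1 \<sigma>1 (wt l \<rho>1 \<sigma>1 k) (mon (i,0) * (B j - mon (0,j)))"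
        unfolding k wt_split[of \<rho>1 \<sigma>1 i j] using lowp_mult2[OF X] Y by blast
      show ?thesis unfolding eq using 1 2 by (rule lowp_add)
    qed
    have "ell l \<rho>1 \<sigma>1 (\<phi> P) = id (ell l \<rho>1 \<sigma>1 P) \<and> vval l \<rho>1 \<sigma>1 (\<phi> P) = vval l \<rho>1 \<sigma>1 P"
    proof (rule main_gen[OF phi_add phi_scale _ _ inj_on_id _ _ _ P0])
      fix k
      show "lowp l \<rho>1 \<sigma>1 (wt l \<rho>1 \<sigma>1 k) (\<phi> (mon k) - id (mon k))" using ll by simp
      show "lep l \<rho>1 \<sigma>1 (wt l \<rho>1 \<sigma>1 k) (id (mon k) :: 'a wl)" by (simp add: lep_single)
      show "gep l \<rho>1 \<sigma>1 (wt l \<rho>1 \<sigma>1 k) (id (mon k) :: 'a wl)" by (simp add: gep_single)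
    qed simp_all
    then show ?thesis by simp
  qed
  show ?thesis using part1 part2 by blast
qed

end
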